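(* Let $\mathcal T$ be a local type with encoding dimension $d$. The equality function $\mathcal T\times\mathcal T\to\mathrm{Bool}$, $(x,y)\mapsto[x=y]$, is representable in $\mathrm{ResMLP}(2d,2)$.
   Context: A local type $\mathcal T$ is a finite set $S$ together with an injective encoding $\phi_{\mathcal T}:S\to\mathbb{R}^{d_{\mathcal T}}$. The product type $\mathcal T_1\times\dots\times\mathcal T_n$ has underlying set $S_1\times\dots\times S_n$ and encoding $(s_1,\dots,s_n)\mapsto\phi_1(s_1)\oplus\dots\oplus\phi_n(s_n)$ (concatenation), of dimension $\sum d_i$. $\mathrm{Bool}$ is the local type $\{\mathrm{false},\mathrm{true}\}$ encoded in $\mathbb{R}^1$ by $\mathrm{false}\mapsto0$, $\mathrm{true}\mapsto1$. A single-layer fully connected network of dimension $d$ is $f_{\mathrm{fcn}}(X)=W_2\,\mathrm{ReLU}(W_1X+B_1)+B_2$ with $W_1\in\mathbb{R}^{4d\times d}$, $B_1\in\mathbb{R}^{4d}$, $W_2\in\mathbb{R}^{d\times 4d}$, $B_2\in\mathbb{R}^d$. $\mathrm{ResMLP}(d,L)$ is the set of maps $X\mapsto X^{(L)}$ with $X^{(0)}=X$, $X^{(l)}=X^{(l-1)}+f^{(l)}_{\mathrm{fcn}}(X^{(l-1)})$. A function $f:\mathcal T\to\mathcal R$ between local types is representable in $\mathrm{ResMLP}(d,L)$ ($d\ge\max(d_{\mathcal T},d_{\mathcal R})$) if there is $\tilde f\in\mathrm{ResMLP}(d,L)$ with $\iota_1\circ\phi_{\mathcal R}\circ f=\tilde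 f\circ\iota_2\circ\phi_{\mathcal T}$, where $\iota_1,\iota_2$ pad with zeros into $\mathbb{R}^d$. *)

theory Defs
  imports Complex_Main
begin

text \<open>Vectors in R^n are modelled as functions nat \<Rightarrow> real whose entries at
indices \<ge> n are zero; matrices as nat \<Rightarrow> nat \<Rightarrow> real, of which only the
entries with indices in range are read. Zero-padding into R^d is then the identity.\<close>

definition supported_in :: "nat \<Rightarrow> (nat \<Rightarrow> real) \<Rightarrow> bool" where
  "supported_in n x \<longleftrightarrow> (\<forall>i\<ge>n. x i = 0)"

definition local_type :: "'a set \<Rightarrow> ('a \<Rightarrow> nat \<Rightarrow> real) \<Rightarrow> nat \<Rightarrow> bool" where
  "local_type S enc d \<longleftrightarrow> finite S \<and> inj_on enc S \<and> (\<forall>s\<in>S. supported_in d (enc s))"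

definition vconcat :: "nat \<Rightarrow> (nat \<Rightarrow> real) \<Rightarrow> (nat \<Rightarrow> real) \<Rightarrow> nat \<Rightarrow> real" where
  "vconcat m x y = (\<lambda>i. if i < m then x i else y (i - m))"

definition prod_enc :: "nat \<Rightarrow> ('a \<Rightarrow> nat \<Rightarrow> real) \<Rightarrow> ('a \<times> 'a) \<Rightarrow> nat \<Rightarrow> real" where
  "prod_enc d enc = (\<lambda>(s, t). vconcat d (enc s) (enc t))"

definition bool_enc :: "bool \<Rightarrow> nat \<Rightarrow> real" where
  "bool_enc b = (\<lambda>i. if i = 0 \<and> b then 1 else 0)"

type_synonym fcn_params = "(nat \<Rightarrow> nat \<Rightarrow> real) \<times> (nat \<Rightarrow> real) \<times> (nat \<Rightarrow> nat \<Rightarrow> real) \<times> (nat \<Rightarrow> real)"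

definition relu :: "real \<Rightarrow> real" where
  "relu x = max 0 x"

definition fcn :: "nat \<Rightarrow> fcn_params \<Rightarrow> (nat \<Rightarrow> real) \<Rightarrow> nat \<Rightarrow> real" where
  "fcn d p X = (case p of (W1, B1, W2, B2) \<Rightarrow>
     (\<lambda>i. if i < d then
            (\<Sum>j<4*d. W2 i j * relu ((\<Sum>k<d. W1 j k * X k) + B1 j)) + B2 i
          else 0))"

fun resmlp_apply :: "nat \<Rightarrow> fcn_params list \<Rightarrow> (nat \<Rightarrow> real) \<Rightarrow> nat \<Rightarrow> real" where
  "resmlp_apply d [] X = X"
| "resmlp_apply d (p # ps) X = resmlp_apply d ps (\<lambda>i. X i + fcn d p X i)"

definition ResMLP :: "nat \<Rightarrow> nat \<Rightarrow> ((nat \<Rightarrow> real) \<Rightarrow> nat \<Rightarrow> real) set" where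
  "ResMLP d L = {F. \<exists>ps. length ps = L \<and> F = resmlp_apply d ps}"

definition representable ::
  "'a set \<Rightarrow> ('a \<Rightarrow> nat \<Rightarrow> real) \<Rightarrow> nat \<Rightarrow> ('b \<Rightarrow> nat \<Rightarrow> real) \<Rightarrow> nat \<Rightarrow>
   ('a \<Rightarrow> 'b) \<Rightarrow> nat \<Rightarrow> nat \<Rightarrow> bool" where
  "representable S encT dT encR dR f d L \<longleftrightarrow>
     d \<ge> max dT dR \<and> (\<exists>F\<in>ResMLP d L. \<forall>s\<in>S. encR (f s) = F (encT s))"

end

theory Submission imports Defs begin

definition sw :: "nat \<Rightarrow> nat \<Rightarrow> nat" where "sw d m = (if m < d then m + d else m - d)"

definition L1 :: "nat \<Rightarrow> fcn_params" where
 "L1 d = ((\<lambda>j k. if j < 2*d then (if k = j then 1 else 0)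
              else if j < 4*d then (if k = j - 2*d then -1 else 0)
              else if j < 6*d then (if k = j - 4*d then 1 else 0) - (if k = sw d (j - 4*d) then 1 else 0)
              else 0),
          (\<lambda>j. 0),
          (\<lambda>i j. (if j = i then -1 else 0) + (if j = 2*d + i then 1 else 0)
                 + (if i = 0 \<and> 4*d \<le> j \<and> j < 6*d then 1 else 0)),
          (\<lambda>i. 0))"

definition zf :: "nat \<Rightarrow> (nat \<Rightarrow> real) \<Rightarrow> real" where
  "zf d X = (\<Sum>m<2*d. relu (X m - X (sw d m)))"

lemma sw_lt: "m < 2*d \<Longrightarrow> sw d m < 2*d" by (auto simp: sw_def)

lemma inner1:
  assumes "j < 6*d"
  shows "(\<Sum>k<2*d. fst (L1 d) j k * X k) =
     (if j < 2*d then X j else if j < 4*d then - X (j - 2*d) else X (j - 4*d) - X (sw d (j - 4*d)))"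
proof (cases "j < 2*d")
  case True
  have "(\<Sum>k<2*d. fst (L1 d) j k * X k) = (\<Sum>k<2*d. if k = j then X k else 0)"
    using True by (intro sum.cong) (auto simp: L1_def)
  thus ?thesis using True by (simp add: sum.delta')
next
  case F: False
  show ?thesis
  proof (cases "j < 4*d")
    case True
    have "j - 2*d < 2*d" using True F by arith
    have "(\<Sum>k<2*d. fst (L1 d) j k * X k) = (\<Sum>k<2*d. if k = j - 2*d then - X k else 0)"
      using F True by (intro sum.cong) (auto simp: L1_def)
    also have "\<dots> = - X (j - 2*d)" using `j - 2*d < 2*d` by (simp add: sum.delta')
    finally show ?thesis using F True by simp
  next
    case False
    have "j - 4*d < 2*d" using False assms by arith
    have "(\<Sum>k<2*d. fst (L1 d) j k * X k) = (\<Sum>k<2*d. (if k = j - 4*d then X k else 0) - (if k = sw d (j - 4*d) then X k else 0))"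
      using F False assms by (intro sum.cong) (auto simp: L1_def)
    also have "\<dots> = X (j - 4*d) - X (sw d (j - 4*d))" using `j - 4*d < 2*d` sw_lt[of "j - 4*d" d]
      by (simp add: sum_subtractf sum.delta')
    finally show ?thesis using F False by simp
  qed
qed

lemma relu_id: "relu (- x) - relu x = - x" by (simp add: relu_def)

lemma layer1:
  assumes "i < 2*d"
  shows "fcn (2*d) (L1 d) X i = - X i + (if i = 0 then zf d X else 0)"
proof -
  have set_eq: "{j. 4*d \<le> j \<and> j < 6*d} = {4*d..<6*d}" by auto
  let ?r = "\<lambda>j. relu ((\<Sum>k<2*d. fst (L1 d) j k * X k) + 0)"
  have "fcn (2*d) (L1 d) X i = (\<Sum>j<4*(2*d). fst (snd (snd (L1 d))) i j * ?r j)"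
    using assms by (simp add: fcn_def L1_def)
  also have "\<dots> = (\<Sum>j<8*d. (if j = i then - ?r j else 0) + (if j = 2*d+i then ?r j else 0)
       + (if i = 0 \<and> j \<in> {4*d..<6*d} then ?r j else 0))"
    by (intro sum.cong) (auto simp: L1_def algebra_simps)
  also have "\<dots> = - ?r i + ?r (2*d+i) + (if i = 0 then (\<Sum>j\<in>{4*d..<6*d}. ?r j) else 0)"
    using assms set_eq by (simp add: sum.distrib sum.delta' sum.If_cases Int_absorb1 subset_eq)
  also have "(\<Sum>j\<in>{4*d..<6*d}. ?r j) = (\<Sum>m<2*d. ?r (m + 4*d))"
  proof -
    have "{4*d..<6*d} = {0+4*d..<2*d+4*d}" by simp
    thus ?thesis by (simp only: sum.shift_bounds_nat_ivl atLeast0LessThan)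
  qed
  also have "\<dots> = zf d X" unfolding zf_def
    by (intro sum.cong) (auto simp: inner1)
  finally show ?thesis using assms by (simp add: inner1 relu_id)
qed


definition L2W1 :: "real \<Rightarrow> nat \<Rightarrow> nat \<Rightarrow> real" where
  "L2W1 c = (\<lambda>j k. if j = 0 \<and> k = 0 then - c else if j = 1 \<and> k = 0 then 1 else 0)"
definition L2B1 :: "nat \<Rightarrow> real" where "L2B1 = (\<lambda>j. if j = 0 then 1 else 0)"
definition L2W2 :: "nat \<Rightarrow> nat \<Rightarrow> real" where
  "L2W2 = (\<lambda>i j. if i = 0 \<and> j = 0 then 1 else if i = 0 \<and> j = 1 then -1 else 0)"
definition L2 :: "real \<Rightarrow> fcn_params" where
 "L2 c = (L2W1 c, L2B1, L2W2, (\<lambda>i. 0))"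

lemma layer2:
  assumes "d \<ge> 1" "z \<ge> 0"
  shows "fcn (2*d) (L2 c) (\<lambda>i. if i = 0 then z else 0) i = (if i = 0 then relu (1 - c*z) - z else 0)"
proof -
  let ?X = "\<lambda>i::nat. if i = 0 then z else 0"
  have inner: "(\<Sum>k<2*d. L2W1 c j k * ?X k) = L2W1 c j 0 * z" for j
  proof -
    have "(\<Sum>k<2*d. L2W1 c j k * ?X k) = (\<Sum>k<2*d. if k = 0 then L2W1 c j 0 * z else 0)"
      by (intro sum.cong) auto
    also have "\<dots> = L2W1 c j 0 * z" using assms by (simp add: sum.delta')
    finally show ?thesis .
  qed
  show ?thesis
  proof (cases "i < 2*d")
    case True
    have "fcn (2*d) (L2 c) ?X i = (\<Sum>j<4*(2*d). L2W2 i j * relu (L2W1 c j 0 * z + L2B1 j))"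
      using True by (simp add: fcn_def L2_def inner)
    also have "\<dots> = (\<Sum>j<8*d. (if j = 0 then (if i = 0 then relu (1 - c*z) else 0) else 0)
          + (if j = 1 then (if i = 0 then - relu z else 0) else 0))"
      by (intro sum.cong) (auto simp: L2W1_def L2B1_def L2W2_def)
    also have "\<dots> = (if i = 0 then relu (1 - c*z) - z else 0)"
      using assms by (simp add: sum.distrib relu_def)
    finally show ?thesis .
  qed (insert assms, simp add: fcn_def L2_def)
qed


lemma zf_nonneg: "zf d X \<ge> 0" unfolding zf_def by (intro sum_nonneg) (simp add: relu_def)

lemma zf_zero:
  assumes "supported_in d a" "supported_in d b" "zf d (vconcat d a b) = 0"
  shows "a = b"
proof
  fix m
  let ?X = "vconcat d a b"
  have all: "\<forall>m\<in>{..<2*d}. relu (?X m - ?X (sw d m)) = 0"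
    using assms(3) unfolding zf_def by (subst sum_nonneg_eq_0_iff[symmetric]) (auto simp: relu_def)
  show "a m = b m"
  proof (cases "m < d")
    case True
    have "relu (?X m - ?X (sw d m)) = 0" "relu (?X (m+d) - ?X (sw d (m+d))) = 0"
      using all True by auto
    thus ?thesis using True by (simp add: relu_def vconcat_def sw_def)
  next
    case False thus ?thesis using assms(1,2) by (simp add: supported_in_def)
  qed
qed

lemma zf_same: "zf d (vconcat d a a) = 0"
  unfolding zf_def by (intro sum.neutral) (auto simp: relu_def vconcat_def sw_def)

lemma supp_concat: "supported_in d a \<Longrightarrow> supported_in d b \<Longrightarrow> supported_in (2*d) (vconcat d a b)"
  by (simp add: supported_in_def vconcat_def)

theorem proposition4:
  fixes S :: "'a set" and enc :: "'a \<Rightarrow> nat \<Rightarrow> real" and d :: nat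
  assumes "local_type S enc d" and "d \<ge> 1"
  shows "representable (S \<times> S) (prod_enc d enc) (2 * d) bool_enc 1
           (\<lambda>(x, y). x = y) (2 * d) 2"
proof -
  have fin: "finite S" and inj: "inj_on enc S" and supp: "\<And>s. s \<in> S \<Longrightarrow> supported_in d (enc s)"
    using assms(1) by (auto simp: local_type_def)
  define Z where "Z = (\<lambda>(s,t). zf d (vconcat d (enc s) (enc t))) ` {p \<in> S \<times> S. fst p \<noteq> snd p}"
  have finZ: "finite Z" unfolding Z_def
    by (intro finite_imageI finite_subset[OF _ finite_cartesian_product[OF fin fin]]) auto
  have Zpos: "w > 0" if wZ: "w \<in> Z" for w
  proof -
    obtain q where q: "q \<in> S \<times> S" "fst q \<noteq> snd q" "w = (\<lambda>(s,t). zf d (vconcat d (enc s) (enc t))) q"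
      using wZ unfolding Z_def by blast
    obtain s t where st: "s \<in> S" "t \<in> S" "s \<noteq> t" "w = zf d (vconcat d (enc s) (enc t))"
      using q by (cases q) auto
    have "enc s \<noteq> enc t" using inj st by (auto dest: inj_onD)
    hence "w \<noteq> 0" using zf_zero[OF supp[OF st(1)] supp[OF st(2)]] st(4) by auto
    moreover have "w \<ge> 0" using zf_nonneg st(4) by simp
    ultimately show ?thesis by simp
  qed
  define c where "c = (\<Sum>w\<in>Z. 1 / w)"
  have cw: "c * w \<ge> 1" if "w \<in> Z" for w
  proof -
    have "1 / w \<le> c" unfolding c_def using finZ that Zpos
      by (intro member_le_sum) (auto simp: less_imp_le)
    hence "(1/w) * w \<le> c * w" using Zpos[OF that] by (intro mult_right_mono) auto
    thus ?thesis using Zpos[OF that] by simp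
  qed
  let ?F = "resmlp_apply (2*d) [L1 d, L2 c]"
  have "?F \<in> ResMLP (2*d) 2" unfolding ResMLP_def by (intro CollectI exI[of _ "[L1 d, L2 c]"]) simp
  moreover have "bool_enc ((\<lambda>(x, y). x = y) p) = ?F (prod_enc d enc p)" if pS: "p \<in> S \<times> S" for p
  proof -
    obtain s t where p: "p = (s,t)" "s \<in> S" "t \<in> S" using pS by auto
    let ?X = "vconcat d (enc s) (enc t)"
    let ?z = "zf d ?X"
    have sX: "supported_in (2*d) ?X" using supp_concat[OF supp supp] p by simp
    have X1: "(\<lambda>i. ?X i + fcn (2*d) (L1 d) ?X i) = (\<lambda>i. if i = 0 then ?z else 0)"
    proof
      fix i show "?X i + fcn (2*d) (L1 d) ?X i = (if i = 0 then ?z else 0)"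
      proof (cases "i < 2*d")
        case True thus ?thesis by (simp add: layer1)
      next
        case False thus ?thesis using sX assms(2) by (simp add: supported_in_def fcn_def split: prod.split)
      qed
    qed
    have "?F ?X = (\<lambda>i. (\<lambda>i. if i = 0 then ?z else 0) i + fcn (2*d) (L2 c) (\<lambda>i. if i = 0 then ?z else 0) i)"
      by (simp only: resmlp_apply.simps X1)
    also have "\<dots> = (\<lambda>i. if i = 0 then relu (1 - c * ?z) else 0)"
      by (rule ext) (simp add: layer2[OF assms(2) zf_nonneg])
    finally have X2: "?F ?X = (\<lambda>i. if i = 0 then relu (1 - c * ?z) else 0)" .
    have "relu (1 - c * ?z) = (if s = t then 1 else 0)"
    proof (cases "s = t")
      case True thus ?thesis using zf_same by (simp add: relu_def)
    next
      case False
      have "?z \<in> Z" unfolding Z_def by (rule image_eqI[of _ _ "(s,t)"]) (use p False in auto)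
      hence "c * ?z \<ge> 1" by (rule cw)
      thus ?thesis using False by (simp add: relu_def)
    qed
    moreover have "prod_enc d enc p = ?X" using p by (simp add: prod_enc_def)
    ultimately show ?thesis using X2 p by (auto simp: bool_enc_def)
  qed
  ultimately have "\<exists>F\<in>ResMLP (2*d) 2. \<forall>p\<in>S \<times> S. bool_enc ((\<lambda>(x, y). x = y) p) = F (prod_enc d enc p)"
    by blast
  thus ?thesis unfolding representable_def using assms(2) by simp
qed

end
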